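(* Let $\Sigma'\subseteq\Sigma$ be alphabets with $\Pi=\Sigma\setminus\Sigma'$ finite, and let $R\subseteq\Sigma^*\times\Sigma^*$ be finite. If $D\subseteq R$ is a family of $\Sigma$-defining relations for $\Pi$ whose derived generator graph $\Gamma_D(D)$ is acyclic, then there exist a set $Q\subseteq(\Sigma')^*\times(\Sigma')^*$ with $|Q|\le|R\setminus D|$ and a sequence of Tietze transformations between $\langle\Sigma\mid R\rangle$ and $\langle\Sigma'\mid Q\rangle$ whose length lies between $n+k$ and $2n+k$, where $n=|R|-|R\cap((\Sigma')^*\times(\Sigma')^* )|-|D|$ and $k=|\Pi|$.
   Context: For an alphabet $\Sigma$, $\Sigma^*$ is the free monoid of words over $\Sigma$. For $R\subseteq\Sigma^*\times\Sigma^*$ (elements written $q\approx r$), $\langle\Sigma\mid R\rangle$ is the quotient of $\Sigma^*$ by the smallest congruence containing $R$, and $u\sim_Rv$ means $u$ rewrites to $v$ by finitely many steps replacing a subword $q$ by $r$ or $r$ by $q$ with $(q,r)\in R$. The Tietze transformations on presentations are: $\mathbf{Gen}(+)$: from $\langle\Sigma\mid R\rangle$ to $\langle\Sigma\cup\{x\}\mid R\cup\{x\approx w\}\rangle$ with $x\notin\Sigma$, $w\in\Sigma^*$; $\mathbf{Gen}(-)$: if $x\approx w$ is in $R$ and $Q=R\setminus\{x\approx w\}\subseteq\Pi^*\times\Pi^*$ where $\Pi=\Sigma\setminus\{x\}$, from $\langle\Sigma\mid R\rangle$ to $\langle\Pi\mid Q\rangle$; $\mathbf{Rel}(+)$: if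 $q\sim_Rr$, from $\langle\Sigma\mid R\rangle$ to $\langle\Sigma\mid R\cup\{q\approx r\}\rangle$; $\mathbf{Rel}(-)$: if $q\approx r$ is in $R$ and $q\sim_Qr$ with $Q=R\setminus\{q\approx r\}$, from $\langle\Sigma\mid R\rangle$ to $\langle\Sigma\mid Q\rangle$. A sequence of Tietze transformations of length $m$ between two presentations is a chain of $m+1$ presentations from the first to the second in which each consecutive pair is related by a single Tietze transformation (applied in either direction). A $\Sigma$-defining relation for $x\in\Sigma$ is a relation $x\approx w$ with $w\in\Sigma^*$; a family of $\Sigma$-defining relations for $\Pi\subseteq\Sigma$ is a set $\{r_x\mid x\in\Pi\}$ with each $r_x$ a $\Sigma$-defining relation for $x$. Its derived generator graph $\Gamma_D(D)$ has vertex set $\Pi$ and an edge $(x,y)$ whenever $y$ occurs in the right-hand side of $r_x$. A directed graph is acyclic if it has no directed path of positive length from a vertex to itself. *)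

theory Defs
  imports Main
begin

text \<open>Words over an alphabet are lists; \<Sigma>* is lists \<Sigma>.
  A relation q \<approx> r is the pair (q, r). A presentation is a pair (alphabet, relations).\<close>

type_synonym 'a rels = "('a list \<times> 'a list) set"
type_synonym 'a pres = "'a set \<times> 'a rels"

definition wf_pres :: "'a set \<Rightarrow> 'a rels \<Rightarrow> bool" where
  "wf_pres S R \<longleftrightarrow> R \<subseteq> lists S \<times> lists S"

definition rstep :: "'a rels \<Rightarrow> 'a list \<Rightarrow> 'a list \<Rightarrow> bool" where
  "rstep R u v \<longleftrightarrow> (\<exists>x y q r. ((q, r) \<in> R \<or> (r, q) \<in> R) \<and> u = x @ q @ y \<and> v = x @ r @ y)"

definition rsim :: "'a rels \<Rightarrow> 'a list \<Rightarrow> 'a list \<Rightarrow> bool" where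
  "rsim R = (rstep R)\<^sup>*\<^sup>*"

definition tietze :: "'a pres \<Rightarrow> 'a pres \<Rightarrow> bool" where
  "tietze P P' \<longleftrightarrow> (case P of (S, R) \<Rightarrow> case P' of (S', R') \<Rightarrow>
     wf_pres S R \<and>
     ( \<comment> \<open>Gen(+)\<close>
       (\<exists>x w. x \<notin> S \<and> w \<in> lists S \<and> S' = insert x S \<and> R' = insert ([x], w) R)
     \<or> \<comment> \<open>Gen(-)\<close>
       (\<exists>x w. ([x], w) \<in> R \<and> S' = S - {x} \<and> w \<in> lists S'
              \<and> R' = R - {([x], w)} \<and> R' \<subseteq> lists S' \<times> lists S')
     \<or> \<comment> \<open>Rel(+)\<close>
       (\<exists>q r. q \<in> lists S \<and> r \<in> lists S \<and> rsim R q r \<and> S' = S \<and> R' = insert (q, r) R)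
     \<or> \<comment> \<open>Rel(-)\<close>
       (\<exists>q r. (q, r) \<in> R \<and> S' = S \<and> R' = R - {(q, r)} \<and> rsim R' q r)))"

definition tietze_seq :: "nat \<Rightarrow> 'a pres \<Rightarrow> 'a pres \<Rightarrow> bool" where
  "tietze_seq m P1 P2 \<longleftrightarrow> (\<exists>ps. length ps = m + 1 \<and> hd ps = P1 \<and> last ps = P2 \<and>
      (\<forall>i < m. tietze (ps ! i) (ps ! Suc i) \<or> tietze (ps ! Suc i) (ps ! i)))"

definition defining_family :: "'a set \<Rightarrow> 'a set \<Rightarrow> 'a rels \<Rightarrow> bool" where
  "defining_family S P D \<longleftrightarrow> (\<exists>w. (\<forall>x\<in>P. w x \<in> lists S) \<and> D = (\<lambda>x. ([x], w x)) ` P)"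

definition derived_graph :: "'a set \<Rightarrow> 'a rels \<Rightarrow> ('a \<times> 'a) set" where
  "derived_graph P D = {(x, y). x \<in> P \<and> y \<in> P \<and> (\<exists>w. ([x], w) \<in> D \<and> y \<in> set w)}"

end

theory Submission
  imports Defs
begin


lemma rsim_refl: "rsim R u u" by (simp add: rsim_def)

lemma rsim_trans: "rsim R u v \<Longrightarrow> rsim R v z \<Longrightarrow> rsim R u z"
  unfolding rsim_def by (rule rtranclp_trans)

lemma rstep_sym: "rstep R u v \<Longrightarrow> rstep R v u"
  unfolding rstep_def by blast

lemma rsim_sym: "rsim R u v \<Longrightarrow> rsim R v u"
  unfolding rsim_def
proof (induction rule: rtranclp_induct)
  case base then show ?case by simp
next
  case (step y z)
  then show ?case by (meson converse_rtranclp_into_rtranclp rstep_sym)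
qed

lemma rsim_step: "(q, r) \<in> R \<Longrightarrow> rsim R q r"
  unfolding rsim_def rstep_def
  by (rule r_into_rtranclp) (metis append_Nil append_Nil2)

lemma rsim_mono: "R \<subseteq> R' \<Longrightarrow> rsim R u v \<Longrightarrow> rsim R' u v"
  unfolding rsim_def
proof -
  assume s: "R \<subseteq> R'" and h: "(rstep R)\<^sup>*\<^sup>* u v"
  have "rstep R \<le> rstep R'" using s unfolding rstep_def by blast
  then show "(rstep R')\<^sup>*\<^sup>* u v" using h by (metis rtranclp_mono predicate2D)
qed

lemma rstep_ctx: "rstep R u v \<Longrightarrow> rstep R (a @ u @ b) (a @ v @ b)"
  unfolding rstep_def
proof -
  assume "\<exists>x y q r. ((q, r) \<in> R \<or> (r, q) \<in> R) \<and> u = x @ q @ y \<and> v = x @ r @ y"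
  then obtain x y q r where "((q, r) \<in> R \<or> (r, q) \<in> R)" "u = x @ q @ y" "v = x @ r @ y" by blast
  then show "\<exists>x y q r. ((q, r) \<in> R \<or> (r, q) \<in> R) \<and> a @ u @ b = x @ q @ y \<and> a @ v @ b = x @ r @ y"
    by (intro exI[of _ "a @ x"] exI[of _ "y @ b"] exI[of _ q] exI[of _ r]) simp
qed

lemma rsim_ctx: "rsim R u v \<Longrightarrow> rsim R (a @ u @ b) (a @ v @ b)"
  unfolding rsim_def
proof (induction rule: rtranclp_induct)
  case base then show ?case by simp
next
  case (step y z)
  then show ?case by (meson rstep_ctx rtranclp.rtrancl_into_rtrancl)
qed

lemma rsim_append: "rsim R a a' \<Longrightarrow> rsim R b b' \<Longrightarrow> rsim R (a @ b) (a' @ b')"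
proof -
  assume 1: "rsim R a a'" and 2: "rsim R b b'"
  have "rsim R ([] @ a @ b) ([] @ a' @ b)" by (rule rsim_ctx[OF 1])
  moreover have "rsim R (a' @ b @ []) (a' @ b' @ [])" by (rule rsim_ctx[OF 2])
  ultimately show ?thesis using rsim_trans by fastforce
qed

lemma word_expand:
  assumes "\<forall>c\<in>set u. \<exists>v\<in>lists S'. rsim D [c] v"
  shows "\<exists>v\<in>lists S'. rsim D u v"
  using assms
proof (induction u)
  case Nil then show ?case using rsim_refl by fastforce
next
  case (Cons c u)
  then obtain v1 v2 where "v1 \<in> lists S'" "rsim D [c] v1" "v2 \<in> lists S'" "rsim D u v2" by auto
  then show ?case using rsim_append[of D "[c]" v1 u v2] by (intro bexI[of _ "v1 @ v2"]) auto
qed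

definition E :: "'a pres \<Rightarrow> 'a pres \<Rightarrow> bool" where
  "E a b \<longleftrightarrow> tietze a b \<or> tietze b a"

lemma seq0: "tietze_seq 0 P P"
  unfolding tietze_seq_def by (intro exI[of _ "[P]"]) auto

lemma seq_cons:
  assumes "tietze P P' \<or> tietze P' P" "tietze_seq m P' P''"
  shows "tietze_seq (Suc m) P P''"
proof -
  obtain ps where ps: "length ps = m + 1" "hd ps = P'" "last ps = P''"
    "\<forall>i < m. tietze (ps ! i) (ps ! Suc i) \<or> tietze (ps ! Suc i) (ps ! i)"
    using assms(2) unfolding tietze_seq_def by blast
  have ne: "ps \<noteq> []" using ps(1) by auto
  have p0: "ps ! 0 = P'" using ps(2) ne by (simp add: hd_conv_nth)
  show ?thesis unfolding tietze_seq_def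
  proof (intro exI[of _ "P # ps"] conjI allI impI)
    show "length (P # ps) = Suc m + 1" using ps by simp
    show "hd (P # ps) = P" by simp
    show "last (P # ps) = P''" using ps ne by simp
    fix i assume i: "i < Suc m"
    show "tietze ((P # ps) ! i) ((P # ps) ! Suc i) \<or> tietze ((P # ps) ! Suc i) ((P # ps) ! i)"
    proof (cases i)
      case 0 then show ?thesis using assms(1) p0 by simp
    next
      case (Suc j) then show ?thesis using ps(4) i by simp
    qed
  qed
qed

lemma tietze_relplus: "wf_pres S R \<Longrightarrow> q \<in> lists S \<Longrightarrow> r \<in> lists S \<Longrightarrow> rsim R q r
  \<Longrightarrow> tietze (S, R) (S, insert (q, r) R)"
  unfolding tietze_def prod.case
  apply (intro conjI, assumption)
  apply (rule disjI2, rule disjI2, rule disjI1)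
  by blast

lemma tietze_relminus: "wf_pres S R \<Longrightarrow> (q, r) \<in> R \<Longrightarrow> rsim (R - {(q, r)}) q r
  \<Longrightarrow> tietze (S, R) (S, R - {(q, r)})"
  unfolding tietze_def prod.case
  apply (intro conjI, assumption)
  apply (rule disjI2, rule disjI2, rule disjI2)
  by blast

lemma tietze_genminus: "wf_pres S R \<Longrightarrow> ([x], w) \<in> R \<Longrightarrow> w \<in> lists (S - {x})
  \<Longrightarrow> R - {([x], w)} \<subseteq> lists (S - {x}) \<times> lists (S - {x})
  \<Longrightarrow> tietze (S, R) (S - {x}, R - {([x], w)})"
  unfolding tietze_def prod.case
  apply (intro conjI, assumption)
  apply (rule disjI2, rule disjI1)
  by blast



lemma phase1:
  assumes "D \<subseteq> A" "A \<subseteq> lists S \<times> lists S" "set ns \<subseteq> lists S \<times> lists S" "distinct ns"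
    "A \<inter> set ns = {}" "\<forall>p\<in>set ns. p \<notin> lists S' \<times> lists S'"
    "\<forall>p\<in>set ns. F p \<in> lists S' \<times> lists S'" "S' \<subseteq> S"
    "\<forall>p\<in>set ns. rsim D (fst p) (fst (F p)) \<and> rsim D (snd p) (snd (F p))"
    "tietze_seq m (S, A \<union> F ` set ns) X"
  shows "tietze_seq (2 * length ns + m) (S, A \<union> set ns) X"
  using assms
proof (induction ns arbitrary: A)
  case Nil then show ?case by simp
next
  case (Cons p ps)
  obtain q r where p: "p = (q, r)" by fastforce
  obtain q' r' where Fp: "F p = (q', r')" by fastforce
  have FpS': "q' \<in> lists S'" "r' \<in> lists S'" using Cons.prems(7) Fp by auto
  have FpS: "q' \<in> lists S" "r' \<in> lists S" using FpS' Cons.prems(8) by auto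
  have pS: "q \<in> lists S" "r \<in> lists S" using Cons.prems(3) p by auto
  have ne: "p \<noteq> F p" using Cons.prems(6,7) by auto
  have pA: "p \<notin> A" using Cons.prems(5) by auto
  have pps: "p \<notin> set ps" using Cons.prems(4) by simp
  have Fpps: "F p \<notin> set ps" using Cons.prems(6) FpS' Fp by auto
  have rq: "rsim D q q'" "rsim D r r'" using Cons.prems(9) p Fp by auto
  define A' where "A' = insert (F p) A"
  have IH: "tietze_seq (2 * length ps + m) (S, A' \<union> set ps) X"
  proof (rule Cons.IH)
    show "D \<subseteq> A'" using Cons.prems(1) A'_def by auto
    show "A' \<subseteq> lists S \<times> lists S" using Cons.prems(2) A'_def Fp FpS by auto
    show "set ps \<subseteq> lists S \<times> lists S" using Cons.prems(3) by auto
    show "distinct ps" using Cons.prems(4) by simp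
    show "A' \<inter> set ps = {}" using Cons.prems(5) A'_def Fpps by auto
    show "\<forall>p\<in>set ps. p \<notin> lists S' \<times> lists S'" using Cons.prems(6) by simp
    show "\<forall>p\<in>set ps. F p \<in> lists S' \<times> lists S'" using Cons.prems(7) by simp
    show "S' \<subseteq> S" by fact
    show "\<forall>p\<in>set ps. rsim D (fst p) (fst (F p)) \<and> rsim D (snd p) (snd (F p))"
      using Cons.prems(9) by simp
    show "tietze_seq m (S, A' \<union> F ` set ps) X" using Cons.prems(10) A'_def by simp
  qed
  define C where "C = insert p (A \<union> set ps)"
  have C: "A \<union> set (p # ps) = C" using C_def by auto
  have CS: "C \<subseteq> lists S \<times> lists S" using C_def Cons.prems(2,3) by auto
  have DC: "D \<subseteq> C" using C_def Cons.prems(1) by auto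
  have s1: "tietze (S, C) (S, insert (q', r') C)"
  proof (rule tietze_relplus)
    show "wf_pres S C" using CS unfolding wf_pres_def by auto
    show "q' \<in> lists S" "r' \<in> lists S" by (fact FpS)+
    have 1: "rsim C q' q" by (rule rsim_sym[OF rsim_mono[OF DC rq(1)]])
    have 2: "rsim C q r" by (rule rsim_step) (simp add: C_def p)
    have 3: "rsim C r r'" by (rule rsim_mono[OF DC rq(2)])
    show "rsim C q' r'" by (rule rsim_trans[OF rsim_trans[OF 1 2] 3])
  qed
  have eq: "insert (q', r') C - {(q, r)} = A' \<union> set ps"
    using C_def A'_def Fp p ne pA pps by auto
  have s2: "tietze (S, insert (q', r') C) (S, insert (q', r') C - {(q, r)})"
  proof (rule tietze_relminus)
    show "wf_pres S (insert (q', r') C)" using CS FpS unfolding wf_pres_def by auto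
    show "(q, r) \<in> insert (q', r') C" using C_def p by auto
    have D2: "D \<subseteq> insert (q', r') C - {(q, r)}" using eq A'_def Cons.prems(1) by auto
    have 1: "rsim (insert (q', r') C - {(q, r)}) q q'" by (rule rsim_mono[OF D2 rq(1)])
    have 2: "rsim (insert (q', r') C - {(q, r)}) q' r'" by (rule rsim_step) (use ne p Fp in auto)
    have 3: "rsim (insert (q', r') C - {(q, r)}) r' r"
      by (rule rsim_sym[OF rsim_mono[OF D2 rq(2)]])
    show "rsim (insert (q', r') C - {(q, r)}) q r" by (rule rsim_trans[OF rsim_trans[OF 1 2] 3])
  qed
  have "tietze_seq (Suc (Suc (2 * length ps + m))) (S, C) X"
    by (rule seq_cons[OF _ seq_cons[OF _ IH[folded eq]]]) (use s1 s2 in blast)+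
  then show ?case using C by simp
qed

lemma phase2:
  assumes "finite T" "T \<inter> S' = {}" "Q \<subseteq> lists S' \<times> lists S'" "wf G"
    "\<forall>x\<in>T. set (w x) \<subseteq> S' \<union> T"
    "\<forall>x y. x \<in> T \<longrightarrow> y \<in> T \<longrightarrow> y \<in> set (w x) \<longrightarrow> (x, y) \<in> G"
  shows "tietze_seq (card T) (S' \<union> T, Q \<union> (\<lambda>x. ([x], w x)) ` T) (S', Q)"
  using assms
proof (induction "card T" arbitrary: T)
  case 0
  then have "T = {}" by simp
  then show ?case using seq0 by simp
next
  case (Suc n)
  then have "T \<noteq> {}" by auto
  then obtain x where x: "x \<in> T" and min: "\<And>y. (y, x) \<in> G \<Longrightarrow> y \<notin> T"
    using wfE_min'[OF Suc.prems(4)] by blast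
  have nx: "\<forall>y\<in>T. x \<notin> set (w y)" using min Suc.prems(6) x by blast
  define T' where "T' = T - {x}"
  have IH: "tietze_seq (card T') (S' \<union> T', Q \<union> (\<lambda>x. ([x], w x)) ` T') (S', Q)"
  proof (rule Suc.hyps(1))
    show "n = card T'" using Suc.hyps(2) Suc.prems(1) x T'_def by simp
    show "finite T'" using Suc.prems(1) T'_def by simp
    show "T' \<inter> S' = {}" using Suc.prems(2) T'_def by auto
    show "Q \<subseteq> lists S' \<times> lists S'" by fact
    show "wf G" by fact
    show "\<forall>y\<in>T'. set (w y) \<subseteq> S' \<union> T'" using Suc.prems(5) nx T'_def by auto
    show "\<forall>xa y. xa \<in> T' \<longrightarrow> y \<in> T' \<longrightarrow> y \<in> set (w xa) \<longrightarrow> (xa, y) \<in> G"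
      using Suc.prems(6) T'_def by auto
  qed
  have xS': "x \<notin> S'" using Suc.prems(2) x by auto
  have Seq: "(S' \<union> T) - {x} = S' \<union> T'" using T'_def xS' by auto
  have xQ: "([x], w x) \<notin> Q" using Suc.prems(3) xS' by auto
  have Req: "(Q \<union> (\<lambda>x. ([x], w x)) ` T) - {([x], w x)} = Q \<union> (\<lambda>x. ([x], w x)) ` T'"
    using xQ T'_def by auto
  have st: "tietze (S' \<union> T, Q \<union> (\<lambda>x. ([x], w x)) ` T)
      ((S' \<union> T) - {x}, (Q \<union> (\<lambda>x. ([x], w x)) ` T) - {([x], w x)})"
  proof (rule tietze_genminus)
    show "wf_pres (S' \<union> T) (Q \<union> (\<lambda>x. ([x], w x)) ` T)"
      unfolding wf_pres_def using Suc.prems(3,5) by auto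
    show "([x], w x) \<in> Q \<union> (\<lambda>x. ([x], w x)) ` T" using x by auto
    show "w x \<in> lists (S' \<union> T - {x})" using Suc.prems(5) nx x by auto
    show "Q \<union> (\<lambda>x. ([x], w x)) ` T - {([x], w x)} \<subseteq> lists (S' \<union> T - {x}) \<times> lists (S' \<union> T - {x})"
      unfolding Req Seq using Suc.prems(3,5) nx T'_def by auto
  qed
  have "card T = Suc (card T')" using card_Suc_Diff1[OF Suc.prems(1) x] T'_def by simp
  then show ?case using seq_cons[OF _ IH] st Seq Req by simp
qed



theorem theorem8:
  fixes \<Sigma> \<Sigma>' :: "'a set" and R D :: "'a rels"
  assumes "\<Sigma>' \<subseteq> \<Sigma>"
    and "finite (\<Sigma> - \<Sigma>')"
    and "R \<subseteq> lists \<Sigma> \<times> lists \<Sigma>"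
    and "finite R"
    and "D \<subseteq> R"
    and "defining_family \<Sigma> (\<Sigma> - \<Sigma>') D"
    and "acyclic (derived_graph (\<Sigma> - \<Sigma>') D)"
  shows "\<exists>Q m. Q \<subseteq> lists \<Sigma>' \<times> lists \<Sigma>' \<and> finite Q \<and> card Q \<le> card (R - D)
           \<and> tietze_seq m (\<Sigma>, R) (\<Sigma>', Q)
           \<and> (card R - card (R \<inter> (lists \<Sigma>' \<times> lists \<Sigma>')) - card D) + card (\<Sigma> - \<Sigma>') \<le> m
           \<and> m \<le> 2 * (card R - card (R \<inter> (lists \<Sigma>' \<times> lists \<Sigma>')) - card D) + card (\<Sigma> - \<Sigma>')"
proof -
  define P where "P = \<Sigma> - \<Sigma>'"
  obtain w where w: "\<forall>x\<in>P. w x \<in> lists \<Sigma>" and Dw: "D = (\<lambda>x. ([x], w x)) ` P"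
    using assms(6) unfolding defining_family_def P_def by blast
  define G where "G = derived_graph P D"
  have Gsub: "G \<subseteq> P \<times> P" unfolding G_def derived_graph_def by auto
  have finG: "finite G" using finite_subset[OF Gsub] assms(2) P_def by auto
  have acG: "acyclic G" using assms(7) G_def P_def by simp
  have wfG: "wf G" by (rule finite_acyclic_wf[OF finG acG])
  have wfG': "wf (G\<inverse>)" by (rule finite_acyclic_wf_converse[OF finG acG])
  have edge: "\<And>x y. x \<in> P \<Longrightarrow> y \<in> P \<Longrightarrow> y \<in> set (w x) \<Longrightarrow> (x, y) \<in> G"
    unfolding G_def derived_graph_def Dw by blast
  have exp1: "x \<in> P \<longrightarrow> (\<exists>v\<in>lists \<Sigma>'. rsim D [x] v)" for x
    using wfG'
  proof (induction x rule: wf_induct_rule)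
    case (less x)
    show ?case
    proof
      assume xP: "x \<in> P"
      have "\<forall>c\<in>set (w x). \<exists>v\<in>lists \<Sigma>'. rsim D [c] v"
      proof
        fix c assume c: "c \<in> set (w x)"
        have "c \<in> \<Sigma>" using w xP c by auto
        show "\<exists>v\<in>lists \<Sigma>'. rsim D [c] v"
        proof (cases "c \<in> \<Sigma>'")
          case True then show ?thesis using rsim_refl by fastforce
        next
          case False
          then have "c \<in> P" using \<open>c \<in> \<Sigma>\<close> P_def by auto
          then have "(c, x) \<in> G\<inverse>" using edge xP c by auto
          then show ?thesis using less \<open>c \<in> P\<close> by blast
        qed
      qed
      then obtain v where v: "v \<in> lists \<Sigma>'" "rsim D (w x) v" using word_expand by blast
      have "rsim D [x] (w x)" by (rule rsim_step) (use Dw xP in auto)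
      then show "\<exists>v\<in>lists \<Sigma>'. rsim D [x] v" using v rsim_trans by blast
    qed
  qed
  have expw: "\<forall>q\<in>lists \<Sigma>. \<exists>v\<in>lists \<Sigma>'. rsim D q v"
  proof
    fix q assume q: "q \<in> lists \<Sigma>"
    have "\<forall>c\<in>set q. \<exists>v\<in>lists \<Sigma>'. rsim D [c] v"
    proof
      fix c assume c: "c \<in> set q"
      show "\<exists>v\<in>lists \<Sigma>'. rsim D [c] v"
      proof (cases "c \<in> \<Sigma>'")
        case True then show ?thesis using rsim_refl by fastforce
      next
        case False
        then have "c \<in> P" using q c P_def by auto
        then show ?thesis using exp1 by blast
      qed
    qed
    then show "\<exists>v\<in>lists \<Sigma>'. rsim D q v" by (rule word_expand)
  qed
  then obtain f where f: "\<forall>q\<in>lists \<Sigma>. f q \<in> lists \<Sigma>' \<and> rsim D q (f q)" by metis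
  define F where "F = (\<lambda>p. (f (fst p), f (snd p)))"
  define N where "N = R - D - lists \<Sigma>' \<times> lists \<Sigma>'"
  define B where "B = R \<inter> lists \<Sigma>' \<times> lists \<Sigma>'"
  have finN: "finite N" using assms(4) N_def by auto
  obtain ns where ns: "set ns = N" "distinct ns" using finite_distinct_list[OF finN] by blast
  define Q where "Q = B \<union> F ` N"
  have DB: "D \<inter> B = {}" unfolding Dw B_def P_def by auto
  have FN: "F ` N \<subseteq> lists \<Sigma>' \<times> lists \<Sigma>'"
  proof
    fix z assume "z \<in> F ` N"
    then obtain p where p: "p \<in> N" "z = F p" by blast
    then have "fst p \<in> lists \<Sigma>" "snd p \<in> lists \<Sigma>" using N_def assms(3) by auto
    then show "z \<in> lists \<Sigma>' \<times> lists \<Sigma>'" using f p F_def by (simp add: mem_Times_iff)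
  qed
  have QS: "Q \<subseteq> lists \<Sigma>' \<times> lists \<Sigma>'"
    unfolding Q_def B_def using FN by auto
  have finQ: "finite Q" unfolding Q_def B_def using finN assms(4) by auto
  have RD: "R - D = B \<union> N" unfolding B_def N_def using DB B_def by auto
  have BN: "B \<inter> N = {}" unfolding B_def N_def by auto
  have finB: "finite B" using assms(4) B_def by auto
  have cardRD: "card (R - D) = card B + card N" unfolding RD using card_Un_disjoint[OF finB finN BN] .
  have cardQ: "card Q \<le> card (R - D)"
  proof -
    have "card Q \<le> card B + card (F ` N)" unfolding Q_def by (rule card_Un_le)
    also have "\<dots> \<le> card B + card N" using card_image_le[OF finN] by simp
    finally show ?thesis using cardRD by simp
  qed
  have finD: "finite D" using assms(4,5) finite_subset by blast
  have cardR: "card R = card (R - D) + card D"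
    using card_Diff_subset[OF finD assms(5)] card_mono[OF assms(4) assms(5)] by simp
  have nN: "card R - card (R \<inter> (lists \<Sigma>' \<times> lists \<Sigma>')) - card D = card N"
    using cardR cardRD B_def by simp
  have PS: "\<Sigma>' \<union> P = \<Sigma>" using assms(1) P_def by auto
  have ph2: "tietze_seq (card P) (\<Sigma>, Q \<union> D) (\<Sigma>', Q)"
  proof -
    have "tietze_seq (card P) (\<Sigma>' \<union> P, Q \<union> (\<lambda>x. ([x], w x)) ` P) (\<Sigma>', Q)"
    proof (rule phase2[where G = G])
      show "finite P" using assms(2) P_def by simp
      show "P \<inter> \<Sigma>' = {}" using P_def by auto
      show "Q \<subseteq> lists \<Sigma>' \<times> lists \<Sigma>'" by (fact QS)
      show "wf G" by (fact wfG)
      show "\<forall>x\<in>P. set (w x) \<subseteq> \<Sigma>' \<union> P" using w PS by auto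
      show "\<forall>x y. x \<in> P \<longrightarrow> y \<in> P \<longrightarrow> y \<in> set (w x) \<longrightarrow> (x, y) \<in> G" using edge by blast
    qed
    then show ?thesis using PS Dw by simp
  qed
  define A where "A = B \<union> D"
  have ph1: "tietze_seq (2 * length ns + card P) (\<Sigma>, A \<union> set ns) (\<Sigma>', Q)"
  proof (rule phase1[where S' = \<Sigma>' and F = F and D = D])
    show "D \<subseteq> A" using A_def by auto
    show "A \<subseteq> lists \<Sigma> \<times> lists \<Sigma>" using A_def B_def assms(3,5) by auto
    show "set ns \<subseteq> lists \<Sigma> \<times> lists \<Sigma>" using ns N_def assms(3) by auto
    show "distinct ns" by (fact ns(2))
    show "A \<inter> set ns = {}" using ns A_def N_def B_def by auto
    show "\<forall>p\<in>set ns. p \<notin> lists \<Sigma>' \<times> lists \<Sigma>'" using ns N_def by auto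
    show "\<forall>p\<in>set ns. F p \<in> lists \<Sigma>' \<times> lists \<Sigma>'" using ns FN by auto
    show "\<Sigma>' \<subseteq> \<Sigma>" by (fact assms(1))
    show "\<forall>p\<in>set ns. rsim D (fst p) (fst (F p)) \<and> rsim D (snd p) (snd (F p))"
    proof
      fix p assume "p \<in> set ns"
      then have "fst p \<in> lists \<Sigma>" "snd p \<in> lists \<Sigma>" using ns N_def assms(3) by auto
      then show "rsim D (fst p) (fst (F p)) \<and> rsim D (snd p) (snd (F p))" using f F_def by simp
    qed
    show "tietze_seq (card P) (\<Sigma>, A \<union> F ` set ns) (\<Sigma>', Q)"
      using ph2 ns A_def Q_def by (simp add: Un_ac)
  qed
  have AR: "A \<union> set ns = R" using A_def B_def ns N_def assms(5) by auto
  have len: "length ns = card N" using ns distinct_card by metis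
  show ?thesis
    apply (rule exI[of _ Q], rule exI[of _ "2 * card N + card P"])
    using QS finQ cardQ ph1 AR len nN P_def by simp
qed

end
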